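(* Let $n\in\mathbb{N}$, $R_+>0$, $\delta\in(0,1)$, $\varepsilon:=\delta^2R_+^{-1}$ and $a,b>0$. On $\mathbb{R}^{2+n}$ with coordinates $(t_1,t_2,x)$, let $r=|x|$, $\tau=\sqrt{t_1^2+t_2^2}$, $u=\frac12(\tau-r)$, $v=\frac12(\tau+r)$, $f=-uv=\frac14(|x|^2-t_1^2-t_2^2)$, $\xi:=(1+\varepsilon u)(1-\varepsilon v)=1-\varepsilon r+\varepsilon^2f$, and \[ \zeta_{a,b;\varepsilon}:=\left\{\frac{f}{(1+\varepsilon u)(1-\varepsilon v)}\exp\left[\frac{2bf^{1/2}}{(1-\varepsilon u)^{1/2}(1+\varepsilon v)^{1/2}}\right]\right\}^{2a}. \] Let $x\in\mathbb{R}^n$ with $|x|\le R_+$, and $t,t_1,t_2\in\mathbb{R}$ with $t^2<t_1^2$ and $t_1^2+t_2^2<|x|^2$. Then \[ \frac{f}{\xi}(t,t_2,x)>\frac{f}{\xi}(t_1,t_2,x)\qquad\text{and}\qquad(\zeta_{a,b;\varepsilon}f)(t,t_2,x)>(\zeta_{a,b;\varepsilon}f)(t_1,t_2,x). \] *)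

theory Defs
  imports "HOL-Analysis.Analysis"
begin

definition rr :: "real ^ 'n \<Rightarrow> real" where
  "rr x = norm x"

definition tau :: "real \<Rightarrow> real \<Rightarrow> real" where
  "tau t1 t2 = sqrt (t1\<^sup>2 + t2\<^sup>2)"

definition uu :: "real \<Rightarrow> real \<Rightarrow> real ^ 'n \<Rightarrow> real" where
  "uu t1 t2 x = (tau t1 t2 - rr x) / 2"

definition vv :: "real \<Rightarrow> real \<Rightarrow> real ^ 'n \<Rightarrow> real" where
  "vv t1 t2 x = (tau t1 t2 + rr x) / 2"

definition ff :: "real \<Rightarrow> real \<Rightarrow> real ^ 'n \<Rightarrow> real" where
  "ff t1 t2 x = - (uu t1 t2 x * vv t1 t2 x)"

definition xi :: "real \<Rightarrow> real \<Rightarrow> real \<Rightarrow> real ^ 'n \<Rightarrow> real" where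
  "xi eps t1 t2 x = (1 + eps * uu t1 t2 x) * (1 - eps * vv t1 t2 x)"

definition zeta :: "real \<Rightarrow> real \<Rightarrow> real \<Rightarrow> real \<Rightarrow> real \<Rightarrow> real ^ 'n \<Rightarrow> real" where
  "zeta a b eps t1 t2 x =
     (ff t1 t2 x / ((1 + eps * uu t1 t2 x) * (1 - eps * vv t1 t2 x))
      * exp (2 * b * sqrt (ff t1 t2 x)
             / (sqrt (1 - eps * uu t1 t2 x) * sqrt (1 + eps * vv t1 t2 x)))) powr (2 * a)"

end

theory Submission
  imports Defs
begin

lemma ff_eq: "ff t1 t2 x = ((norm x)\<^sup>2 - (t1\<^sup>2 + t2\<^sup>2)) / 4"
proof -
  have "(sqrt (t1\<^sup>2 + t2\<^sup>2))\<^sup>2 = t1\<^sup>2 + t2\<^sup>2" by simp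
  then show ?thesis unfolding ff_def uu_def vv_def tau_def rr_def
    by (simp add: field_simps power2_eq_square)
qed

lemma xi_eq: "xi eps t1 t2 x = 1 - eps * norm x + eps\<^sup>2 * ff t1 t2 x"
  unfolding xi_def ff_def uu_def vv_def rr_def by (simp add: field_simps power2_eq_square)

lemma other_eq: "(1 - eps * uu t1 t2 x) * (1 + eps * vv t1 t2 x) = 1 + eps * norm x + eps\<^sup>2 * ff t1 t2 x"
  unfolding ff_def uu_def vv_def rr_def by (simp add: field_simps power2_eq_square)

lemma mono_frac:
  fixes c e F1 F :: real
  assumes "0 < c" "0 \<le> e" "0 < F1" "F1 < F"
  shows "F1 / (c + e * F1) < F / (c + e * F)"
proof -
  have p1: "c + e * F1 > 0" using assms by (simp add: add_pos_nonneg)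
  have p2: "c + e * F > 0" using assms by (simp add: add_pos_nonneg)
  have "F1 * (c + e * F) < F * (c + e * F1)"
    using assms by (simp add: algebra_simps)
  then show ?thesis using p1 p2 by (simp add: divide_simps)
qed

lemma zeta_eq:
  assumes "0 \<le> eps" "0 \<le> ff t1 t2 x" "eps * norm x < 1"
  shows "zeta a b eps t1 t2 x =
    (ff t1 t2 x / (1 - eps * norm x + eps\<^sup>2 * ff t1 t2 x)
     * exp (2 * b * sqrt (ff t1 t2 x / (1 + eps * norm x + eps\<^sup>2 * ff t1 t2 x)))) powr (2 * a)"
proof -
  have u: "uu t1 t2 x \<le> 0" unfolding uu_def tau_def rr_def
  proof -
    have "t1\<^sup>2 + t2\<^sup>2 \<le> (norm x)\<^sup>2" using assms(2) ff_eq[of t1 t2 x] by simp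
    then have "sqrt (t1\<^sup>2 + t2\<^sup>2) \<le> norm x" by (simp add: real_le_lsqrt)
    then show "(sqrt (t1\<^sup>2 + t2\<^sup>2) - norm x) / 2 \<le> 0" by simp
  qed
  have v: "vv t1 t2 x \<ge> 0" unfolding vv_def tau_def rr_def by simp
  have h1: "1 - eps * uu t1 t2 x \<ge> 0" using u assms(1) mult_nonneg_nonpos[of eps "uu t1 t2 x"] by linarith
  have h2: "1 + eps * vv t1 t2 x \<ge> 0" using v assms(1) by simp
  have "sqrt (1 - eps * uu t1 t2 x) * sqrt (1 + eps * vv t1 t2 x)
      = sqrt (1 + eps * norm x + eps\<^sup>2 * ff t1 t2 x)"
    by (simp add: real_sqrt_mult[symmetric] other_eq)
  then have "sqrt (ff t1 t2 x) / (sqrt (1 - eps * uu t1 t2 x) * sqrt (1 + eps * vv t1 t2 x))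
      = sqrt (ff t1 t2 x / (1 + eps * norm x + eps\<^sup>2 * ff t1 t2 x))"
    by (simp add: real_sqrt_divide)
  then show ?thesis unfolding zeta_def
    using xi_eq[of eps t1 t2 x, unfolded xi_def]
    by (metis (no_types, lifting) times_divide_eq_right)
qed

theorem lemma4p4:
  fixes x :: "real ^ 'n" and Rp \<delta> eps a b t t1 t2 :: real
  assumes "Rp > 0" and "0 < \<delta>" and "\<delta> < 1" and "eps = \<delta>\<^sup>2 / Rp"
    and "a > 0" and "b > 0"
    and "norm x \<le> Rp"
    and "t\<^sup>2 < t1\<^sup>2" and "t1\<^sup>2 + t2\<^sup>2 < (norm x)\<^sup>2"
  shows "ff t t2 x / xi eps t t2 x > ff t1 t2 x / xi eps t1 t2 x
    \<and> zeta a b eps t t2 x * ff t t2 x > zeta a b eps t1 t2 x * ff t1 t2 x"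
proof -
  define F1 where "F1 = ff t1 t2 x"
  define F where "F = ff t t2 x"
  have F1p: "0 < F1" unfolding F1_def ff_eq using assms(9) by simp
  have FF: "F1 < F" unfolding F1_def F_def ff_eq using assms(8) by simp
  have e0: "0 \<le> eps" using assms(1,4) by simp
  have d2: "\<delta>\<^sup>2 < 1" using assms(2,3) by (simp add: power_less_one_iff)
  have "eps * norm x \<le> eps * Rp" using e0 assms(7) by (simp add: mult_left_mono)
  also have "eps * Rp = \<delta>\<^sup>2" using assms(1,4) by simp
  finally have er: "eps * norm x < 1" using d2 by simp
  have c: "0 < 1 - eps * norm x" using er by simp
  have d: "0 < 1 + eps * norm x" using er e0 by (simp add: add_pos_nonneg)
  have e2: "0 \<le> eps\<^sup>2" by simp
  have A: "F1 / (1 - eps * norm x + eps\<^sup>2 * F1) < F / (1 - eps * norm x + eps\<^sup>2 * F)"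
    by (rule mono_frac[OF c e2 F1p FF])
  have B: "F1 / (1 + eps * norm x + eps\<^sup>2 * F1) < F / (1 + eps * norm x + eps\<^sup>2 * F)"
    by (rule mono_frac[OF d e2 F1p FF])
  have B0: "0 \<le> F1 / (1 + eps * norm x + eps\<^sup>2 * F1)" using F1p d e2
    by (simp add: add_pos_nonneg)
  have A0: "0 < F1 / (1 - eps * norm x + eps\<^sup>2 * F1)" using F1p c e2
    by (simp add: add_pos_nonneg)
  have A1: "0 < F / (1 - eps * norm x + eps\<^sup>2 * F)" using A0 A by linarith
  have S: "sqrt (F1 / (1 + eps * norm x + eps\<^sup>2 * F1)) \<le> sqrt (F / (1 + eps * norm x + eps\<^sup>2 * F))"
    using B by simp
  have E: "exp (2 * b * sqrt (F1 / (1 + eps * norm x + eps\<^sup>2 * F1)))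
      \<le> exp (2 * b * sqrt (F / (1 + eps * norm x + eps\<^sup>2 * F)))"
    using S assms(6) by simp
  have I: "F1 / (1 - eps * norm x + eps\<^sup>2 * F1) * exp (2 * b * sqrt (F1 / (1 + eps * norm x + eps\<^sup>2 * F1)))
     < F / (1 - eps * norm x + eps\<^sup>2 * F) * exp (2 * b * sqrt (F / (1 + eps * norm x + eps\<^sup>2 * F)))"
    by (rule mult_less_le_imp_less[OF A E]) (use A0 in auto)
  have I0: "0 \<le> F1 / (1 - eps * norm x + eps\<^sup>2 * F1) * exp (2 * b * sqrt (F1 / (1 + eps * norm x + eps\<^sup>2 * F1)))"
    using A0 by (intro mult_nonneg_nonneg) auto
  have P: "(F1 / (1 - eps * norm x + eps\<^sup>2 * F1) * exp (2 * b * sqrt (F1 / (1 + eps * norm x + eps\<^sup>2 * F1)))) powr (2*a)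
     < (F / (1 - eps * norm x + eps\<^sup>2 * F) * exp (2 * b * sqrt (F / (1 + eps * norm x + eps\<^sup>2 * F)))) powr (2*a)"
    by (rule powr_less_mono2) (use assms(5) I0 I in auto)
  have Z1: "zeta a b eps t1 t2 x = (F1 / (1 - eps * norm x + eps\<^sup>2 * F1) * exp (2 * b * sqrt (F1 / (1 + eps * norm x + eps\<^sup>2 * F1)))) powr (2*a)"
    unfolding F1_def by (rule zeta_eq[OF e0 _ er]) (use F1p F1_def in simp)
  have Z: "zeta a b eps t t2 x = (F / (1 - eps * norm x + eps\<^sup>2 * F) * exp (2 * b * sqrt (F / (1 + eps * norm x + eps\<^sup>2 * F)))) powr (2*a)"
    unfolding F_def by (rule zeta_eq[OF e0 _ er]) (use F1p FF F_def in simp)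
  have "zeta a b eps t1 t2 x * F1 < zeta a b eps t t2 x * F"
    unfolding Z1 Z by (rule mult_strict_mono[OF P FF]) (use F1p A1 in auto)
  moreover have "F1 / xi eps t1 t2 x < F / xi eps t t2 x"
    using A unfolding xi_eq F1_def F_def .
  ultimately show ?thesis unfolding F1_def F_def by simp
qed

end
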